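(* Let $n\ge 4$ and let $W$ be a euclidean metric Lie $n$-algebra, written as an orthogonal direct sum of ideals $W=\mathfrak{a}\oplus\mathfrak{s}^{(n)}_1\oplus\dots\oplus\mathfrak{s}^{(n)}_q$, where $\mathfrak{a}$ is abelian and each $\mathfrak{s}^{(n)}_i$ is a copy of the simple euclidean Lie $n$-algebra $\mathfrak{s}^{(n)}$. Suppose $W$ additionally carries an alternating $(n-1)$-linear bracket $[x_1,\dots,x_{n-1}]$ making it a Lie $(n-1)$-algebra, such that for every $x_1,\dots,x_{n-2}\in W$ the adjoint map $\mathrm{ad}_{x_1,\dots,x_{n-2}}:y\mapsto[x_1,\dots,x_{n-2},y]$ is skew-symmetric with respect to the inner product of $W$ and is a derivation of the $n$-bracket of $W$. Then each $\mathrm{ad}_{x_1,\dots,x_{n-2}}$ preserves each of the summands $\mathfrak{a},\mathfrak{s}^{(n)}_1,\dots,\mathfrak{s}^{(n)}_q$; consequently each of these summands is an ideal of the Lie $(n-1)$-algebra $(W,[\cdot,\dots,\cdot])$.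
   Context: All vector spaces are real and finite-dimensional. For $k\ge 2$, a Lie $k$-algebra is a vector space with an alternating $k$-linear bracket such that each $\mathrm{ad}_{x_1,\dots,x_{k-1}}:y\mapsto[x_1,\dots,x_{k-1},y]$ is a derivation of the bracket; an ideal is a subspace $I$ with $[I,W,\dots,W]\subset I$; it is abelian if all brackets vanish. A metric Lie $k$-algebra has a nondegenerate symmetric bilinear form for which all $\mathrm{ad}$ maps are skew-symmetric; euclidean means the form is positive definite. For $k\ge 3$, $\mathfrak{s}^{(k)}$ denotes the $(k+1)$-dimensional Lie $k$-algebra with basis $\boldsymbol e_1,\dots,\boldsymbol e_{k+1}$ and bracket $[\boldsymbol e_1,\dots,\widehat{\boldsymbol e_i},\dots,\boldsymbol e_{k+1}]=(-1)^i\boldsymbol e_i$ (hat denotes omission), with an inner product making this basis orthogonal with all $\langle\boldsymbol e_i,\boldsymbol e_i\rangle$ equal to the same positive number. *)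

theory Defs
  imports "HOL-Analysis.Analysis"
begin

text \<open>A k-ary bracket on a finite-dimensional real inner product space 'v is modelled as a
function on lists; only its values on lists of length k matter.\<close>

definition multilinear_br :: "nat \<Rightarrow> ('v::real_vector list \<Rightarrow> 'v) \<Rightarrow> bool" where
  "multilinear_br k br \<longleftrightarrow>
     (\<forall>xs i. length xs = k \<longrightarrow> i < k \<longrightarrow> linear (\<lambda>y. br (xs[i := y])))"

definition alternating_br :: "nat \<Rightarrow> ('v::real_vector list \<Rightarrow> 'v) \<Rightarrow> bool" where
  "alternating_br k br \<longleftrightarrow>
     (\<forall>xs i j. length xs = k \<longrightarrow> i < k \<longrightarrow> j < k \<longrightarrow> i \<noteq> j \<longrightarrow> xs ! i = xs ! j \<longrightarrow> br xs = 0)"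

definition ad_br :: "('v list \<Rightarrow> 'v) \<Rightarrow> 'v list \<Rightarrow> 'v \<Rightarrow> 'v" where
  "ad_br br xs = (\<lambda>y. br (xs @ [y]))"

definition derivation_br :: "nat \<Rightarrow> ('v::real_vector list \<Rightarrow> 'v) \<Rightarrow> ('v \<Rightarrow> 'v) \<Rightarrow> bool" where
  "derivation_br k br D \<longleftrightarrow>
     (\<forall>ys. length ys = k \<longrightarrow> D (br ys) = (\<Sum>i<k. br (ys[i := D (ys ! i)])))"

definition lie_k_algebra :: "nat \<Rightarrow> ('v::real_vector list \<Rightarrow> 'v) \<Rightarrow> bool" where
  "lie_k_algebra k br \<longleftrightarrow> 2 \<le> k \<and> multilinear_br k br \<and> alternating_br k br \<and>
     (\<forall>xs. length xs = k - 1 \<longrightarrow> derivation_br k br (ad_br br xs))"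

definition skew_map :: "('v::real_inner \<Rightarrow> 'v) \<Rightarrow> bool" where
  "skew_map D \<longleftrightarrow> (\<forall>y z. inner (D y) z = - inner y (D z))"

definition euclidean_metric_lie_k_algebra :: "nat \<Rightarrow> ('v::euclidean_space list \<Rightarrow> 'v) \<Rightarrow> bool" where
  "euclidean_metric_lie_k_algebra k br \<longleftrightarrow> lie_k_algebra k br \<and>
     (\<forall>xs. length xs = k - 1 \<longrightarrow> skew_map (ad_br br xs))"

definition ideal_br :: "nat \<Rightarrow> ('v::real_vector list \<Rightarrow> 'v) \<Rightarrow> 'v set \<Rightarrow> bool" where
  "ideal_br k br I \<longleftrightarrow> subspace I \<and>
     (\<forall>x ys. x \<in> I \<longrightarrow> length ys = k - 1 \<longrightarrow> br (x # ys) \<in> I)"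

definition abelian_ideal_br :: "nat \<Rightarrow> ('v::real_vector list \<Rightarrow> 'v) \<Rightarrow> 'v set \<Rightarrow> bool" where
  "abelian_ideal_br k br I \<longleftrightarrow> ideal_br k br I \<and>
     (\<forall>xs. length xs = k \<longrightarrow> set xs \<subseteq> I \<longrightarrow> br xs = 0)"

definition copy_of_s :: "nat \<Rightarrow> ('v::euclidean_space list \<Rightarrow> 'v) \<Rightarrow> 'v set \<Rightarrow> bool" where
  "copy_of_s n br S \<longleftrightarrow>
     (\<exists>(e :: nat \<Rightarrow> 'v) (c :: real). c > 0 \<and>
        e ` {1..n+1} \<subseteq> S \<and> span (e ` {1..n+1}) = S \<and>
        (\<forall>i\<in>{1..n+1}. \<forall>j\<in>{1..n+1}. i \<noteq> j \<longrightarrow> inner (e i) (e j) = 0) \<and>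
        (\<forall>i\<in>{1..n+1}. inner (e i) (e i) = c) \<and>
        (\<forall>i\<in>{1..n+1}. br (map e (filter (\<lambda>j. j \<noteq> i) [1..<n+2])) = (-1) ^ i *\<^sub>R e i))"

end

theory Submission
  imports Defs
begin

lemma br_swap:
  assumes ml: "multilinear_br k br" and al: "alternating_br k br" and len: "length xs = k"
    and ij: "i < k" "j < k" "i \<noteq> j"
  shows "br (xs[i:=u, j:=v]) = - br (xs[i:=v, j:=u])"
proof -
  define h where "h u v = br (xs[i:=u, j:=v])" for u v
  have lin1: "linear (\<lambda>u. h u v)" for v
  proof -
    have "linear (\<lambda>u. br ((xs[j:=v])[i:=u]))" using ml len ij unfolding multilinear_br_def by simp
    moreover have "(xs[j:=v])[i:=u] = xs[i:=u,j:=v]" for u using ij by (simp add: list_update_swap)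
    ultimately show ?thesis unfolding h_def by simp
  qed
  have lin2: "linear (\<lambda>v. h u v)" for u
    using ml len ij unfolding multilinear_br_def h_def by simp
  have z: "h w w = 0" for w
  proof -
    have "(xs[i:=w,j:=w]) ! i = w" "(xs[i:=w,j:=w]) ! j = w" using len ij by auto
    moreover have "length (xs[i:=w,j:=w]) = k" using len by simp
    ultimately show ?thesis using al ij unfolding alternating_br_def h_def
      by (metis (no_types, lifting))
  qed
  have "0 = h (u+v) (u+v)" using z by simp
  also have "\<dots> = h u u + h u v + (h v u + h v v)"
    using linear_add[OF lin1, of u v "u+v"] linear_add[OF lin2, of u u v] linear_add[OF lin2, of v u v]
    by simp
  finally have "h u v = - h v u" using z by (simp add: eq_neg_iff_add_eq_0 add.commute)
  then show ?thesis unfolding h_def .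
qed

lemma br_move:
  assumes ml: "multilinear_br k br" and al: "alternating_br k br" and len: "length l = k"
    and ij: "p < k" "q < k" "p \<noteq> q"
  shows "br l = - br (l[p := l!q, q := l!p])"
proof -
  have "l[p := l!p, q := l!q] = l" by simp
  then show ?thesis using br_swap[OF ml al len ij, of "l!p" "l!q"] by simp
qed

lemma ideal_any_pos:
  assumes ml: "multilinear_br k br" and al: "alternating_br k br" and I: "ideal_br k br I"
    and len: "length l = k" and p: "p < k" and lp: "l ! p \<in> I"
  shows "br l \<in> I"
proof -
  have sub: "subspace I" using I unfolding ideal_br_def by simp
  have front: "br m \<in> I" if "length m = k" "m ! 0 \<in> I" "0 < k" for m
  proof -
    have "m \<noteq> []" using that by auto
    then obtain x ys where m: "m = x # ys" by (meson neq_Nil_conv)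
    then show ?thesis using I that unfolding ideal_br_def by auto
  qed
  show ?thesis
  proof (cases "p = 0")
    case True then show ?thesis using front len lp p by simp
  next
    case False
    have "br l = - br (l[0 := l!p, p := l!0])" using br_move[OF ml al len, of 0 p] p False by simp
    moreover have "br (l[0 := l!p, p := l!0]) \<in> I"
      using front[of "l[0 := l!p, p := l!0]"] len p False lp by simp
    ultimately show ?thesis using subspace_neg[OF sub] by simp
  qed
qed

theorem lemma3p0:
  fixes n q :: nat
    and br :: "'v::euclidean_space list \<Rightarrow> 'v"
    and br' :: "'v list \<Rightarrow> 'v"
    and A :: "'v set"
    and S :: "nat \<Rightarrow> 'v set"
  assumes n: "n \<ge> 4"
    and W: "euclidean_metric_lie_k_algebra n br"
    and A_ideal: "abelian_ideal_br n br A"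
    and S_ideal: "\<And>i. i < q \<Longrightarrow> ideal_br n br (S i)"
    and S_copy: "\<And>i. i < q \<Longrightarrow> copy_of_s n br (S i)"
    and orth_AS: "\<And>i x y. i < q \<Longrightarrow> x \<in> A \<Longrightarrow> y \<in> S i \<Longrightarrow> inner x y = 0"
    and orth_SS: "\<And>i j x y. i < q \<Longrightarrow> j < q \<Longrightarrow> i \<noteq> j \<Longrightarrow> x \<in> S i \<Longrightarrow> y \<in> S j \<Longrightarrow> inner x y = 0"
    and spanning: "\<And>w. \<exists>a\<in>A. \<exists>s. (\<forall>i<q. s i \<in> S i) \<and> w = a + (\<Sum>i<q. s i)"
    and W': "lie_k_algebra (n - 1) br'"
    and skew': "\<And>xs. length xs = n - 2 \<Longrightarrow> skew_map (ad_br br' xs)"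
    and deriv': "\<And>xs. length xs = n - 2 \<Longrightarrow> derivation_br n br (ad_br br' xs)"
  shows "(\<forall>xs. length xs = n - 2 \<longrightarrow>
            ad_br br' xs ` A \<subseteq> A \<and> (\<forall>i<q. ad_br br' xs ` S i \<subseteq> S i))
         \<and> ideal_br (n - 1) br' A \<and> (\<forall>i<q. ideal_br (n - 1) br' (S i))"
proof -
  have ml: "multilinear_br n br" and al: "alternating_br n br"
    using W unfolding euclidean_metric_lie_k_algebra_def lie_k_algebra_def by auto
  have ml': "multilinear_br (n-1) br'" and al': "alternating_br (n-1) br'"
    using W' unfolding lie_k_algebra_def by auto
  have subA: "subspace A" using A_ideal unfolding abelian_ideal_br_def ideal_br_def by simp
  have subS: "subspace (S i)" if "i < q" for i using S_ideal[OF that] unfolding ideal_br_def by simp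
  have linD: "linear (ad_br br' xs)" if len: "length xs = n - 2" for xs
  proof -
    have "linear (\<lambda>y. br' ((xs @ [0])[n-2 := y]))"
      using ml' len n unfolding multilinear_br_def by simp
    moreover have "(xs @ [0])[n-2 := y] = xs @ [y]" for y using len by (simp add: list_update_append)
    ultimately show ?thesis unfolding ad_br_def by simp
  qed
  have DS: "ad_br br' xs ` S i \<subseteq> S i" if len: "length xs = n - 2" and i: "i < q" for xs i
  proof -
    define D where "D = ad_br br' xs"
    have lin: "linear D" using linD[OF len] D_def by simp
    have der: "derivation_br n br D" using deriv'[OF len] D_def by simp
    obtain e :: "nat \<Rightarrow> 'v" and c where
      eS: "e ` {1..n+1} \<subseteq> S i" and sp: "span (e ` {1..n+1}) = S i" and
      brk: "\<forall>k\<in>{1..n+1}. br (map e (filter (\<lambda>j. j \<noteq> k) [1..<n+2])) = (-1) ^ k *\<^sub>R e k"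
      using S_copy[OF i] unfolding copy_of_s_def by blast
    have De: "D (e k) \<in> S i" if k: "k \<in> {1..n+1}" for k
    proof -
      define L where "L = map e (filter (\<lambda>j. j \<noteq> k) [1..<n+2])"
      have "set (filter (\<lambda>j. j \<noteq> k) [1..<n+2]) = {1..n+1} - {k}" by auto
      moreover have "distinct (filter (\<lambda>j. j \<noteq> k) [1..<n+2])" by simp
      ultimately have "length (filter (\<lambda>j. j \<noteq> k) [1..<n+2]) = card ({1..n+1} - {k})"
        by (metis distinct_card)
      also have "\<dots> = n" using k by simp
      finally have lenL: "length L = n" unfolding L_def by simp
      have Lin: "L ! p \<in> S i" if "p < n" for p
      proof -
        have "L ! p \<in> set L" using that lenL by simp
        also have "set L \<subseteq> S i" unfolding L_def using eS by auto
        finally show ?thesis .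
      qed
      have ek: "e k = (-1) ^ k *\<^sub>R br L"
      proof -
        have "(-1) ^ k *\<^sub>R br L = ((-1) ^ k * (-1) ^ k) *\<^sub>R e k"
          using brk k unfolding L_def by simp
        also have "(-1::real) ^ k * (-1) ^ k = 1" by (simp flip: power_add)
        finally show ?thesis by simp
      qed
      have "D (br L) = (\<Sum>p<n. br (L[p := D (L ! p)]))" using der lenL unfolding derivation_br_def by simp
      also have "\<dots> \<in> S i"
      proof (rule subspace_sum[OF subS[OF i]])
        fix p assume p: "p \<in> {..<n}"
        define p' :: nat where "p' = (if p = 0 then 1 else 0)"
        have p': "p' < n" "p' \<noteq> p" using n unfolding p'_def by auto
        have "L[p := D (L ! p)] ! p' \<in> S i" using p' Lin by simp
        then show "br (L[p := D (L ! p)]) \<in> S i"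
          using ideal_any_pos[OF ml al S_ideal[OF i], of "L[p := D (L ! p)]" p'] lenL p' by simp
      qed
      finally have "D (br L) \<in> S i" .
      then have "(-1) ^ k *\<^sub>R D (br L) \<in> S i" using subspace_scale[OF subS[OF i]] by simp
      then show ?thesis using ek linear_cmul[OF lin] by simp
    qed
    have "D ` S i = span (D ` e ` {1..n+1})" using sp linear_span_image[OF lin] by simp
    also have "\<dots> \<subseteq> S i" using De subS[OF i] by (intro span_minimal) auto
    finally show ?thesis unfolding D_def .
  qed
  have DA: "ad_br br' xs ` A \<subseteq> A" if len: "length xs = n - 2" for xs
  proof
    fix y assume "y \<in> ad_br br' xs ` A"
    then obtain a where a: "a \<in> A" and y: "y = ad_br br' xs a" by auto
    obtain a' s where a': "a' \<in> A" and s: "\<forall>i<q. s i \<in> S i" and dec: "y = a' + (\<Sum>i<q. s i)"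
      using spanning[of y] by blast
    have s0: "s i = 0" if i: "i < q" for i
    proof -
      have "ad_br br' xs (s i) \<in> S i" using DS[OF len i] s i by auto
      then have "inner y (s i) = 0" using skew'[OF len] orth_AS[OF i a] unfolding skew_map_def y
        by simp
      moreover have "inner y (s i) = inner (s i) (s i)"
      proof -
        have "inner y (s i) = inner a' (s i) + (\<Sum>j<q. inner (s j) (s i))"
          unfolding dec by (simp add: inner_add_left inner_sum_left)
        also have "(\<Sum>j<q. inner (s j) (s i)) = (\<Sum>j\<in>{i}. inner (s j) (s i))"
          by (rule sum.mono_neutral_right) (use i s orth_SS in fastforce)+
        finally show ?thesis using orth_AS[OF i a'] s i by simp
      qed
      ultimately show ?thesis by simp
    qed
    have "(\<Sum>i<q. s i) = 0" using s0 by simp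
    then show "y \<in> A" using dec a' by simp
  qed
  have ideal': "ideal_br (n - 1) br' I" if subI: "subspace I"
    and DI: "\<And>xs. length xs = n - 2 \<Longrightarrow> ad_br br' xs ` I \<subseteq> I" for I :: "'v set"
    unfolding ideal_br_def
  proof (intro conjI subI allI impI)
    fix x and ys :: "'v list" assume x: "x \<in> I" and len: "length ys = n - 1 - 1"
    define l where "l = x # ys"
    have lenl: "length l = n - 1" using len n unfolding l_def by simp
    define l' where "l' = l[0 := l ! (n-2), n-2 := l ! 0]"
    have lenl': "length l' = n - 1" using lenl unfolding l'_def by simp
    have "br' l = - br' l'" unfolding l'_def using br_move[OF ml' al' lenl, of 0 "n-2"] n by simp
    moreover have "l' = take (n-2) l' @ [x]"
    proof -
      have "take (Suc (n-2)) l' = take (n-2) l' @ [l' ! (n-2)]"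
        using lenl' n by (intro take_Suc_conv_app_nth) simp
      moreover have "Suc (n-2) = length l'" using lenl' n by simp
      ultimately have "l' = take (n-2) l' @ [l' ! (n-2)]" by simp
      moreover have "l' ! (n-2) = l ! 0" unfolding l'_def
        by (rule nth_list_update_eq) (use lenl n in simp)
      moreover have "l ! 0 = x" unfolding l_def by simp
      ultimately show ?thesis by simp
    qed
    then have "br' l' = ad_br br' (take (n-2) l') x" unfolding ad_br_def by metis
    moreover have "ad_br br' (take (n-2) l') x \<in> I" using DI[of "take (n-2) l'"] lenl' x n by auto
    ultimately show "br' (x # ys) \<in> I" using subspace_neg[OF subI] unfolding l_def by simp
  qed
  show ?thesis
    using DA DS ideal'[OF subA DA] ideal'[OF subS DS] by blast
qed

end
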